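(* A responsive social choice function $f:\Theta\to Z$ satisfies strict event monotonicity if and only if it satisfies strict iterated-elimination monotonicity.
   Context: Setting: $\mathcal{I}$ is a finite set of agents with $|\mathcal{I}|\ge3$; $\Theta$ is a finite set of $n$ states; $Z$ is a countable set of pure outcomes; $Y=\Delta(Z)$ is the set of lotteries on $Z$, each $z\in Z$ identified with the degenerate lottery. Each agent $i$ has at each state $\theta$ a utility $u_i(\cdot,\theta):Z\to\mathbb{R}$, extended to $Y$ by expected utility $u_i(y,\theta)=\sum_z y_zu_i(z,\theta)$. An SCF is a map $f:\Theta\to Z$ (assumed throughout with $|f(\Theta)|\ge2$); it is responsive if it is injective. Active agents: $\mathcal{I}^{\theta}=\{i\in\mathcal{I}:\exists z\in Z,\ u_i(f(\theta),\theta)>u_i(z,\theta)\}$; for nonempty $E\subseteq\Theta$, $\mathcal{I}^E=\bigcap_{\theta\in E}\mathcal{I}^\theta$. Strict event monotonicity: for every $\theta'\in\Theta$ and nonempty $E\subseteq\Theta$, if for all $\theta\in E$, $y\in Y$, $i\in\mathcal{I}^E$ we have [$u_i(f(\theta),\theta)>u_i(y,\theta)\Rightarrow u_i(f(\theta),\theta')\ge u_i(y,\theta')$], then $f(E)=\{f(\theta')\}$. Strict iterated-elimination monotonicity: for every $\theta'\in\Theta$ there exists $(\theta^1,\dots,\theta^n)$ with $\{\theta^1,\dots,\theta^n\}=\Theta$ and $\theta^n=\theta'$ such that for every $k\in\{1,\dots,n-1\}$ there exist $y\in Y$ and $i\in\mathcal{I}^{\{\theta^k,\theta^{k+1},\dots,\theta^n\}}$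 with $u_i(f(\theta^k),\theta^k)>u_i(y,\theta^k)$ and $u_i(y,\theta')>u_i(f(\theta^k),\theta')$. *)

theory Defs
  imports "HOL-Probability.Probability_Mass_Function"
begin

text \<open>Agents: finite type 'i; states: finite type 's; pure outcomes: countable type 'z.
  u i z s is the utility of agent i for pure outcome z at state s.  Y is the set of lotteries for which every expected utility
  is well defined (integrable).\<close>

definition lotteries :: "('i \<Rightarrow> 'z \<Rightarrow> 's \<Rightarrow> real) \<Rightarrow> 'z pmf set" where
  "lotteries u = {y. \<forall>i s. integrable (measure_pmf y) (\<lambda>z. u i z s)}"

definition EU :: "('i \<Rightarrow> 'z \<Rightarrow> 's \<Rightarrow> real) \<Rightarrow> 'i \<Rightarrow> 'z pmf \<Rightarrow> 's \<Rightarrow> real" where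
  "EU u i y s = measure_pmf.expectation y (\<lambda>z. u i z s)"

definition active :: "('i \<Rightarrow> 'z \<Rightarrow> 's \<Rightarrow> real) \<Rightarrow> ('s \<Rightarrow> 'z) \<Rightarrow> 's \<Rightarrow> 'i set" where
  "active u f s = {i. \<exists>z. u i (f s) s > u i z s}"

definition active_event :: "('i \<Rightarrow> 'z \<Rightarrow> 's \<Rightarrow> real) \<Rightarrow> ('s \<Rightarrow> 'z) \<Rightarrow> 's set \<Rightarrow> 'i set" where
  "active_event u f E = (\<Inter>s\<in>E. active u f s)"

definition strict_event_monotone :: "('i \<Rightarrow> 'z \<Rightarrow> 's \<Rightarrow> real) \<Rightarrow> ('s \<Rightarrow> 'z) \<Rightarrow> bool" where
  "strict_event_monotone u f \<longleftrightarrow>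
    (\<forall>s' E. E \<noteq> {} \<longrightarrow>
      (\<forall>s\<in>E. \<forall>y\<in>lotteries u. \<forall>i\<in>active_event u f E.
          u i (f s) s > EU u i y s \<longrightarrow> u i (f s) s' \<ge> EU u i y s')
      \<longrightarrow> f ` E = {f s'})"

text \<open>The enumeration (theta^1,...,theta^n) is a list xs of length n = CARD('s), listing
  every state exactly once, with last element theta'.  Index k (1-based) corresponds to xs ! (k-1),
  and {theta^k,...,theta^n} = set (drop (k-1) xs).\<close>

definition strict_iterated_elimination_monotone ::
  "('i \<Rightarrow> 'z \<Rightarrow> 's::finite \<Rightarrow> real) \<Rightarrow> ('s \<Rightarrow> 'z) \<Rightarrow> bool" where
  "strict_iterated_elimination_monotone u f \<longleftrightarrow>
    (\<forall>s'. \<exists>xs. length xs = CARD('s) \<and> distinct xs \<and> set xs = UNIV \<and> last xs = s' \<and>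
      (\<forall>k < CARD('s) - 1. \<exists>y\<in>lotteries u. \<exists>i\<in>active_event u f (set (drop k xs)).
          u i (f (xs ! k)) (xs ! k) > EU u i y (xs ! k) \<and>
          EU u i y s' > u i (f (xs ! k)) s'))"

end

theory Submission
  imports Defs
begin

definition Wit :: "('i \<Rightarrow> 'z \<Rightarrow> 's \<Rightarrow> real) \<Rightarrow> ('s \<Rightarrow> 'z) \<Rightarrow> 's set \<Rightarrow> 's \<Rightarrow> 's \<Rightarrow> bool" where
  "Wit u f E s s' \<longleftrightarrow> (\<exists>y\<in>lotteries u. \<exists>i\<in>active_event u f E.
          u i (f s) s > EU u i y s \<and> EU u i y s' > u i (f s) s')"

lemma active_event_anti: "E \<subseteq> F \<Longrightarrow> active_event u f F \<subseteq> active_event u f E"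
  unfolding active_event_def by blast

lemma drop_in: "k \<le> m \<Longrightarrow> m < length xs \<Longrightarrow> xs ! m \<in> set (drop k xs)"
proof -
  assume a: "k \<le> m" "m < length xs"
  have "drop k xs ! (m - k) = xs ! m" using a by simp
  moreover have "m - k < length (drop k xs)" using a by simp
  ultimately show ?thesis by (metis nth_mem)
qed

lemma build_list:
  fixes u :: "'i \<Rightarrow> 'z \<Rightarrow> 's \<Rightarrow> real" and f :: "'s \<Rightarrow> 'z"
  assumes sem: "strict_event_monotone u f" and inj: "inj f"
  shows "finite E \<Longrightarrow> s' \<in> E \<Longrightarrow> \<exists>xs. distinct xs \<and> set xs = E \<and> last xs = s' \<and>
     (\<forall>k < length xs - 1. Wit u f (set (drop k xs)) (xs ! k) s')"
proof (induction "card E" arbitrary: E rule: less_induct)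
  case less
  show ?case
  proof (cases "E = {s'}")
    case True
    then show ?thesis by (intro exI[of _ "[s']"]) auto
  next
    case False
    have "f ` E \<noteq> {f s'}"
    proof
      assume "f ` E = {f s'}"
      then have "E \<subseteq> {s'}" using inj by (auto simp: inj_def)
      with False less.prems show False by blast
    qed
    have "E \<noteq> {}" using less.prems(2) by blast
    have semE: "E \<noteq> {} \<longrightarrow> (\<forall>s\<in>E. \<forall>y\<in>lotteries u. \<forall>i\<in>active_event u f E.
          u i (f s) s > EU u i y s \<longrightarrow> u i (f s) s' \<ge> EU u i y s') \<longrightarrow> f ` E = {f s'}"
      using sem unfolding strict_event_monotone_def by (rule allE[of _ s']) (rule allE[of _ E])
    have "\<exists>s\<in>E. \<exists>y\<in>lotteries u. \<exists>i\<in>active_event u f E.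
          u i (f s) s > EU u i y s \<and> EU u i y s' > u i (f s) s'"
    proof (rule ccontr)
      assume H: "\<not> (\<exists>s\<in>E. \<exists>y\<in>lotteries u. \<exists>i\<in>active_event u f E.
          u i (f s) s > EU u i y s \<and> EU u i y s' > u i (f s) s')"
      have "\<forall>s\<in>E. \<forall>y\<in>lotteries u. \<forall>i\<in>active_event u f E.
          u i (f s) s > EU u i y s \<longrightarrow> u i (f s) s' \<ge> EU u i y s'"
      proof (intro ballI impI)
        fix s y i assume a: "s \<in> E" "y \<in> lotteries u" "i \<in> active_event u f E"
          "u i (f s) s > EU u i y s"
        have "\<not> (EU u i y s' > u i (f s) s')" using H a by blast
        then show "u i (f s) s' \<ge> EU u i y s'" by simp
      qed
      then have "f ` E = {f s'}" using semE \<open>E \<noteq> {}\<close> by blast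
      then show False using \<open>f ` E \<noteq> {f s'}\<close> by simp
    qed
    then obtain s y i where s: "s \<in> E" "y \<in> lotteries u" "i \<in> active_event u f E"
      "u i (f s) s > EU u i y s" "EU u i y s' > u i (f s) s'" by blast
    have W: "Wit u f E s s'" unfolding Wit_def using s by blast
    have "s \<noteq> s'"
    proof
      assume "s = s'"
      then have "EU u i y s > u i (f s) s" using s(5) by simp
      with s(4) show False by linarith
    qed
    have lt: "card (E - {s}) < card E" by (rule card_Diff1_less[OF less.prems(1) s(1)])
    have fin: "finite (E - {s})" using less.prems(1) by simp
    have sin: "s' \<in> E - {s}" using less.prems(2) \<open>s \<noteq> s'\<close> by simp
    obtain xs where xs: "distinct xs" "set xs = E - {s}" "last xs = s'"
      "\<forall>k < length xs - 1. Wit u f (set (drop k xs)) (xs ! k) s'"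
      using less.hyps[OF lt fin sin] by blast
    have "s' \<in> set xs" using xs(2) sin by simp
    then have ne: "xs \<noteq> []" by auto
    show ?thesis
    proof (intro exI[of _ "s # xs"] conjI allI impI)
      show "distinct (s # xs)" using xs(1,2) by simp
      show "set (s # xs) = E" using xs(2) s(1) by (simp add: insert_absorb)
      show "last (s # xs) = s'" using xs(3) ne by simp
      fix k assume k: "k < length (s # xs) - 1"
      show "Wit u f (set (drop k (s # xs))) ((s # xs) ! k) s'"
      proof (cases k)
        case 0
        have "set (s # xs) = E" using xs(2) s(1) by (simp add: insert_absorb)
        then show ?thesis using W 0 by simp
      next
        case (Suc j)
        then have "j < length xs - 1" using k by simp
        then have "Wit u f (set (drop j xs)) (xs ! j) s'" using xs(4) by blast
        then show ?thesis using Suc by simp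
      qed
    qed
  qed
qed

theorem proposition1:
  fixes u :: "'i::finite \<Rightarrow> 'z::countable \<Rightarrow> 's::finite \<Rightarrow> real"
    and f :: "'s \<Rightarrow> 'z"
  assumes "CARD('i) \<ge> 3"
    and "card (range f) \<ge> 2"
    and "inj f"
  shows "strict_event_monotone u f \<longleftrightarrow> strict_iterated_elimination_monotone u f"
proof
  assume sem: "strict_event_monotone u f"
  show "strict_iterated_elimination_monotone u f"
    unfolding strict_iterated_elimination_monotone_def
  proof
    fix s' :: 's
    obtain xs where xs: "distinct xs" "set xs = UNIV" "last xs = s'"
      "\<forall>k < length xs - 1. Wit u f (set (drop k xs)) (xs ! k) s'"
      using build_list[OF sem assms(3), of UNIV s'] by auto
    have len: "length xs = CARD('s)" using distinct_card[OF xs(1)] xs(2) by simp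
    show "\<exists>xs. length xs = CARD('s) \<and> distinct xs \<and> set xs = UNIV \<and> last xs = s' \<and>
      (\<forall>k < CARD('s) - 1. \<exists>y\<in>lotteries u. \<exists>i\<in>active_event u f (set (drop k xs)).
          u i (f (xs ! k)) (xs ! k) > EU u i y (xs ! k) \<and>
          EU u i y s' > u i (f (xs ! k)) s')"
    proof (intro exI[of _ xs] conjI)
      show "\<forall>k < CARD('s) - 1. \<exists>y\<in>lotteries u. \<exists>i\<in>active_event u f (set (drop k xs)).
          u i (f (xs ! k)) (xs ! k) > EU u i y (xs ! k) \<and>
          EU u i y s' > u i (f (xs ! k)) s'"
        using xs(4) len unfolding Wit_def by simp
    qed (use xs len in auto)
  qed
next
  assume siem: "strict_iterated_elimination_monotone u f"
  show "strict_event_monotone u f"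
    unfolding strict_event_monotone_def
  proof (intro allI impI)
    fix s' :: 's and E :: "'s set"
    assume ne: "E \<noteq> {}"
      and C: "\<forall>s\<in>E. \<forall>y\<in>lotteries u. \<forall>i\<in>active_event u f E.
          u i (f s) s > EU u i y s \<longrightarrow> u i (f s) s' \<ge> EU u i y s'"
    show "f ` E = {f s'}"
    proof (rule ccontr)
      assume nE: "f ` E \<noteq> {f s'}"
      then obtain t where t: "t \<in> E" "t \<noteq> s'" using ne by auto
      obtain xs where xs: "length xs = CARD('s)" "distinct xs" "set xs = UNIV" "last xs = s'"
        and W: "\<forall>k < CARD('s) - 1. \<exists>y\<in>lotteries u. \<exists>i\<in>active_event u f (set (drop k xs)).
          u i (f (xs ! k)) (xs ! k) > EU u i y (xs ! k) \<and>
          EU u i y s' > u i (f (xs ! k)) s'"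
        using siem unfolding strict_iterated_elimination_monotone_def by blast
      define P where "P = (\<lambda>k. k < length xs \<and> xs ! k \<in> E \<and> xs ! k \<noteq> s')"
      obtain j where j: "j < length xs" "xs ! j = t" using t xs(3) by (metis UNIV_I in_set_conv_nth)
      have Pj: "P j" using j t unfolding P_def by auto
      define k where "k = (LEAST k. P k)"
      have Pk: "P k" unfolding k_def using Pj by (rule LeastI)
      have min: "\<And>m. P m \<Longrightarrow> k \<le> m" unfolding k_def by (rule Least_le)
      have nonempty: "xs \<noteq> []" using j by auto
      have lastidx: "xs ! (length xs - 1) = s'" using xs(4) nonempty by (simp add: last_conv_nth)
      have "k \<noteq> length xs - 1" using Pk lastidx unfolding P_def by auto
      then have "k < length xs - 1" using Pk unfolding P_def by linarith
      then have kl: "k < CARD('s) - 1" using xs(1) by simp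
      have sub: "E \<subseteq> set (drop k xs)"
      proof
        fix x assume x: "x \<in> E"
        obtain m where m: "m < length xs" "xs ! m = x" using xs(3) by (metis UNIV_I in_set_conv_nth)
        show "x \<in> set (drop k xs)"
        proof (cases "x = s'")
          case True
          then have "xs ! (length xs - 1) = x" using lastidx by simp
          moreover have "length xs - 1 \<ge> k" using kl xs(1) by simp
          ultimately show ?thesis using nonempty drop_in[of k "length xs - 1" xs] by simp
        next
          case False
          then have "P m" using m x unfolding P_def by auto
          then have "k \<le> m" by (rule min)
          then show ?thesis using m drop_in[of k m xs] by simp
        qed
      qed
      obtain y i where yi: "y \<in> lotteries u" "i \<in> active_event u f (set (drop k xs))"
        "u i (f (xs ! k)) (xs ! k) > EU u i y (xs ! k)" "EU u i y s' > u i (f (xs ! k)) s'"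
        using W kl by blast
      have "i \<in> active_event u f E" using yi(2) active_event_anti[OF sub, of u f] by blast
      moreover have "xs ! k \<in> E" using Pk unfolding P_def by auto
      ultimately have "u i (f (xs ! k)) s' \<ge> EU u i y s'" using C yi(1,3) by blast
      then show False using yi(4) by simp
    qed
  qed
qed

end
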